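(* Let $K\subseteq\mathbb{C}$ be a number field of class number $1$ that is stable under complex conjugation, let $\mathcal{O}_K$ be its ring of integers and $K_0:=K\cap\mathbb{R}$. Let $n$ be odd. If $v\in\mathcal{O}_K^n$ is a column of a matrix $A\in\mathcal{O}_K^{n\times n}$ with $A^*A=\lambda I$ where $\lambda=v^*v$, then there exists $r\in\mathcal{O}_K$ with $\lambda=r\overline{r}$ (and $\lambda\in\mathcal{O}_{K_0}$).
   Context: $A^*=\overline{A}^T$ denotes the conjugate transpose. In particular (taking $K=\mathbb{Q}(i)$), if $n$ is odd and $v\in\mathbb{Z}[i]^n$ is a column of an $n\times n$ Gaussian integer matrix $A$ with $A^*A=\lambda I$, then $\lambda$ is a sum of two squares of rational integers. *)

theory Defs
  imports "HOL-Analysis.Analysis" "HOL-Computational_Algebra.Polynomial"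
begin

definition subfield_of_complex :: "complex set \<Rightarrow> bool" where
  "subfield_of_complex K \<longleftrightarrow> 0 \<in> K \<and> 1 \<in> K \<and>
     (\<forall>x\<in>K. \<forall>y\<in>K. x + y \<in> K \<and> x * y \<in> K) \<and>
     (\<forall>x\<in>K. - x \<in> K) \<and> (\<forall>x\<in>K. x \<noteq> 0 \<longrightarrow> inverse x \<in> K)"

definition number_field :: "complex set \<Rightarrow> bool" where
  "number_field K \<longleftrightarrow> subfield_of_complex K \<and>
     (\<exists>B. finite B \<and> B \<subseteq> K \<and>
        (\<forall>x\<in>K. \<exists>c. (\<forall>b\<in>B. c b \<in> \<rat>) \<and> x = (\<Sum>b\<in>B. c b * b)))"

definition ring_of_integers :: "complex set \<Rightarrow> complex set" where
  "ring_of_integers K = {x \<in> K. algebraic_int x}"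

definition is_ideal_in :: "complex set \<Rightarrow> complex set \<Rightarrow> bool" where
  "is_ideal_in I R \<longleftrightarrow> I \<subseteq> R \<and> 0 \<in> I \<and>
     (\<forall>x\<in>I. \<forall>y\<in>I. x + y \<in> I) \<and> (\<forall>r\<in>R. \<forall>x\<in>I. r * x \<in> I)"

definition class_number_one :: "complex set \<Rightarrow> bool" where
  "class_number_one K \<longleftrightarrow>
     (\<forall>I. is_ideal_in I (ring_of_integers K) \<longrightarrow>
        (\<exists>a\<in>ring_of_integers K. I = {a * r | r. r \<in> ring_of_integers K}))"

definition conj_transpose :: "complex ^'n ^'m \<Rightarrow> complex ^'m ^'n" where
  "conj_transpose A = (\<chi> i j. cnj (A $ j $ i))"

end

theory Submission
  imports Defs Jordan_Normal_Form.Char_Poly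
begin

lemma alg_int_eig:
  fixes x :: complex and g :: "nat \<Rightarrow> complex" and c :: "nat \<Rightarrow> nat \<Rightarrow> int"
  assumes "i0 < k" "g i0 \<noteq> 0"
    and "\<And>i. i < k \<Longrightarrow> x * g i = (\<Sum>j\<in>{0..<k}. of_int (c i j) * g j)"
  shows "algebraic_int x"
proof -
  define C :: "int mat" where "C = Matrix.mat k k (\<lambda>(i,j). c i j)"
  define CC :: "complex mat" where "CC = map_mat of_int C"
  define v where "v = Matrix.vec k g"
  have C: "C \<in> carrier_mat k k" by (simp add: C_def)
  have CC: "CC \<in> carrier_mat k k" using C by (simp add: CC_def)
  have "CC *\<^sub>v v = x \<cdot>\<^sub>v v"
    by (rule eq_vecI) (auto simp: CC_def C_def v_def mult_mat_vec_def scalar_prod_def assms(3) mult.commute)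
  moreover have "v \<noteq> 0\<^sub>v k"
  proof
    assume "v = 0\<^sub>v k"
    hence "v $ i0 = 0" using assms(1) by simp
    thus False using assms(1,2) by (simp add: v_def)
  qed
  ultimately have "eigenvector CC v x" unfolding eigenvector_def using CC by (auto simp: v_def)
  hence "eigenvalue CC x" unfolding eigenvalue_def by blast
  hence "poly (char_poly CC) x = 0" using eigenvalue_root_char_poly[OF CC] by simp
  moreover have "char_poly CC = map_poly of_int (char_poly C)" unfolding CC_def by (rule of_int_hom.char_poly_hom[OF C])
  moreover have "lead_coeff (char_poly C) = 1" using degree_monic_char_poly[OF C] by simp
  ultimately show ?thesis using algebraic_int_altdef_ipoly by metis
qed


definition zspan :: "complex set \<Rightarrow> complex set" where
  "zspan G = {\<Sum>h\<in>G. of_int (c h) * h | c. True}"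

lemma zspan_I: "a = (\<Sum>h\<in>G. of_int (c h) * h) \<Longrightarrow> a \<in> zspan G"
  unfolding zspan_def by blast

lemma zspan_E: "a \<in> zspan G \<Longrightarrow> \<exists>c. a = (\<Sum>h\<in>G. of_int (c h) * h)"
  unfolding zspan_def by blast

lemma zspan_add: "a \<in> zspan G \<Longrightarrow> b \<in> zspan G \<Longrightarrow> a + b \<in> zspan G"
proof -
  assume "a \<in> zspan G" "b \<in> zspan G"
  then obtain c d where "a = (\<Sum>h\<in>G. of_int (c h) * h)" "b = (\<Sum>h\<in>G. of_int (d h) * h)"
    using zspan_E by metis
  hence "a + b = (\<Sum>h\<in>G. of_int (c h + d h) * h)"
    by (simp add: sum.distrib distrib_right)
  thus ?thesis by (rule zspan_I)
qed

lemma zspan_scale: "a \<in> zspan G \<Longrightarrow> of_int m * a \<in> zspan G"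
proof -
  assume "a \<in> zspan G"
  then obtain c where "a = (\<Sum>h\<in>G. of_int (c h) * h)" using zspan_E by metis
  hence "of_int m * a = (\<Sum>h\<in>G. of_int (m * c h) * h)"
    by (simp add: sum_distrib_left mult.assoc)
  thus ?thesis by (rule zspan_I)
qed

lemma zspan_0: "0 \<in> zspan G"
proof -
  have "0 = (\<Sum>h\<in>G. of_int ((\<lambda>_. 0) h) * h)" by simp
  thus ?thesis by (rule zspan_I)
qed

lemma zspan_mem: assumes "finite G" "g \<in> G" shows "g \<in> zspan G"
proof -
  have "(\<Sum>h\<in>G. of_int ((\<lambda>h. if h = g then 1 else 0) h) * h) = (\<Sum>h\<in>G. if h = g then g else 0)"
    by (rule sum.cong) auto
  also have "\<dots> = g" using assms by (simp add: sum.delta')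
  finally show ?thesis by (intro zspan_I) (rule sym)
qed

lemma zspan_sum: "finite S \<Longrightarrow> (\<forall>i\<in>S. f i \<in> zspan G) \<Longrightarrow> sum f S \<in> zspan G"
  by (induction S rule: finite_induct) (auto intro: zspan_0 zspan_add)

lemma zspan_mult_closed:
  assumes "finite G" "\<forall>h\<in>G. x * h \<in> zspan G" "z \<in> zspan G"
  shows "x * z \<in> zspan G"
proof -
  obtain c where z: "z = (\<Sum>h\<in>G. of_int (c h) * h)" using assms(3) zspan_E by metis
  have "x * z = (\<Sum>h\<in>G. of_int (c h) * (x * h))"
    unfolding z by (simp add: sum_distrib_left mult.left_commute)
  also have "\<dots> \<in> zspan G"
    using assms by (intro zspan_sum) (auto intro: zspan_scale)
  finally show ?thesis .
qed

lemma alg_int_zspan: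
  assumes "finite G" "g0 \<in> G" "g0 \<noteq> 0" "\<forall>h\<in>G. x * h \<in> zspan G"
  shows "algebraic_int x"
proof -
  define k where "k = card G"
  obtain f where f: "bij_betw f {0..<k} G" using ex_bij_betw_nat_finite[OF assms(1)] k_def by blast
  have "\<forall>i. \<exists>c. i < k \<longrightarrow> x * f i = (\<Sum>h\<in>G. of_int (c h) * h)"
  proof
    fix i
    show "\<exists>c. i < k \<longrightarrow> x * f i = (\<Sum>h\<in>G. of_int (c h) * h)"
    proof (cases "i < k")
      case True
      hence "f i \<in> G" using f by (auto simp: bij_betw_def)
      hence "x * f i \<in> zspan G" using assms(4) by blast
      thus ?thesis using zspan_E by metis
    qed auto
  qed
  then obtain cc where cc: "\<And>i. i < k \<Longrightarrow> x * f i = (\<Sum>h\<in>G. of_int (cc i h) * h)" by metis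
  obtain i0 where i0: "i0 < k" "f i0 = g0" using f assms(2) by (auto simp: bij_betw_def)
  show ?thesis
  proof (rule alg_int_eig[of i0 k f x "\<lambda>i j. cc i (f j)"])
    show "i0 < k" "f i0 \<noteq> 0" using i0 assms(3) by auto
    fix i assume "i < k"
    have "x * f i = (\<Sum>h\<in>G. of_int (cc i h) * h)" using cc[OF \<open>i < k\<close>] .
    also have "\<dots> = (\<Sum>j\<in>{0..<k}. of_int (cc i (f j)) * f j)"
      using sum.reindex_bij_betw[OF f, of "\<lambda>h. of_int (cc i h) * h"] by simp
    finally show "x * f i = (\<Sum>j\<in>{0..<k}. of_int (cc i (f j)) * f j)" .
  qed
qed

lemma alg_int_key:
  fixes x :: complex and p :: "int poly"
  assumes "lead_coeff p = 1" "poly (map_poly of_int p) x = 0"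
  shows "x ^ degree p = - (\<Sum>t<degree p. of_int (coeff p t) * x ^ t)"
proof -
  have dg: "degree (map_poly (of_int :: int \<Rightarrow> complex) p) = degree p"
    by (rule degree_map_poly) simp
  have "0 = (\<Sum>i\<le>degree p. of_int (coeff p i) * x ^ i)"
    using assms(2) unfolding poly_altdef dg by (simp add: coeff_map_poly)
  also have "\<dots> = (\<Sum>t<degree p. of_int (coeff p t) * x ^ t) + x ^ degree p"
    using assms(1) by (simp add: lessThan_Suc_atMost[symmetric])
  finally show ?thesis by (simp add: eq_neg_iff_add_eq_0 add.commute)
qed

lemma alg_int_pows:
  fixes x :: complex and p :: "int poly"
  assumes "lead_coeff p = 1" "poly (map_poly of_int p) x = 0"
  shows "x ^ i \<in> zspan ((\<lambda>t. x ^ t) ` {..<degree p})" "degree p > 0"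
proof -
  let ?G = "(\<lambda>t. x ^ t) ` {..<degree p}"
  have fin: "finite ?G" by simp
  have key: "x ^ degree p \<in> zspan ?G"
  proof -
    have "(\<Sum>t<degree p. of_int (coeff p t) * x ^ t) \<in> zspan ?G"
      by (intro zspan_sum ballI zspan_scale zspan_mem fin) auto
    hence "of_int (-1) * (\<Sum>t<degree p. of_int (coeff p t) * x ^ t) \<in> zspan ?G"
      by (rule zspan_scale)
    thus ?thesis unfolding alg_int_key[OF assms] by simp
  qed
  show "degree p > 0"
  proof (rule ccontr)
    assume "\<not> degree p > 0"
    hence "degree p = 0" by simp
    with alg_int_key[OF assms] show False by simp
  qed
  have step: "\<forall>h\<in>?G. x * h \<in> zspan ?G"
  proof
    fix h assume "h \<in> ?G"
    then obtain t where t: "t < degree p" "h = x ^ t" by auto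
    show "x * h \<in> zspan ?G"
    proof (cases "Suc t < degree p")
      case True
      thus ?thesis using t by (intro zspan_mem) (auto intro!: image_eqI[of _ _ "Suc t"])
    next
      case False
      hence "Suc t = degree p" using t by simp
      thus ?thesis using t key by (metis power_Suc)
    qed
  qed
  show "x ^ i \<in> zspan ?G"
  proof (induction i)
    case 0
    show ?case using \<open>degree p > 0\<close> by (intro zspan_mem) (auto intro!: image_eqI[of 1 _ 0])
  next
    case (Suc i)
    thus ?case using zspan_mult_closed[OF fin step] by simp
  qed
qed


lemma alg_int_prod_span:
  fixes x y :: complex
  assumes p: "lead_coeff p = 1" "poly (map_poly of_int p) x = 0"
      and q: "lead_coeff q = 1" "poly (map_poly of_int q) y = 0"
  shows "x ^ i * y ^ j \<in> zspan ((\<lambda>(i,j). x ^ i * y ^ j) ` ({..<degree p} \<times> {..<degree q}))"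
proof -
  define G where "G = (\<lambda>(i,j). x ^ i * y ^ j) ` ({..<degree p} \<times> {..<degree q})"
  let ?Gx = "(\<lambda>t. x ^ t) ` {..<degree p}"
  let ?Gy = "(\<lambda>t. y ^ t) ` {..<degree q}"
  have finG: "finite G" unfolding G_def by simp
  obtain c where c: "x ^ i = (\<Sum>h\<in>?Gx. of_int (c h) * h)" using alg_int_pows(1)[OF p] zspan_E by metis
  obtain d where d: "y ^ j = (\<Sum>h\<in>?Gy. of_int (d h) * h)" using alg_int_pows(1)[OF q] zspan_E by metis
  have "x ^ i * y ^ j = (\<Sum>h\<in>?Gx. \<Sum>h'\<in>?Gy. of_int (c h * d h') * (h * h'))"
    unfolding c d by (simp add: sum_product mult_ac)
  also have "\<dots> \<in> zspan G"
  proof (intro zspan_sum ballI zspan_scale)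
    show "finite ?Gx" "finite ?Gy" by simp_all
    fix h h' assume "h \<in> ?Gx" "h' \<in> ?Gy"
    then obtain t s where ts: "t < degree p" "s < degree q" "h = x ^ t" "h' = y ^ s" by auto
    have "h * h' \<in> G" unfolding G_def using ts by (auto intro!: image_eqI[of _ _ "(t,s)"])
    thus "h * h' \<in> zspan G" using finG by (rule zspan_mem[rotated])
  qed
  finally show ?thesis unfolding G_def .
qed

lemma alg_int_closed:
  fixes x y :: complex
  assumes "algebraic_int x" "algebraic_int y"
  shows "algebraic_int (x + y)" "algebraic_int (x * y)"
proof -
  obtain p where p: "poly (map_poly of_int p) x = 0" "lead_coeff p = 1"
    using assms(1) algebraic_int_altdef_ipoly by blast
  obtain q where q: "poly (map_poly of_int q) y = 0" "lead_coeff q = 1"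
    using assms(2) algebraic_int_altdef_ipoly by blast
  define G where "G = (\<lambda>(i,j). x ^ i * y ^ j) ` ({..<degree p} \<times> {..<degree q})"
  have sp: "\<And>i j. x ^ i * y ^ j \<in> zspan G" unfolding G_def
    by (rule alg_int_prod_span) (use p q in auto)
  have finG: "finite G" unfolding G_def by simp
  have "degree p > 0" "degree q > 0" using alg_int_pows(2) p q by blast+
  hence oneG: "1 \<in> G" unfolding G_def by (auto intro!: image_eqI[of _ _ "(0,0)"])
  show "algebraic_int (x + y)"
  proof (rule alg_int_zspan[OF finG oneG])
    show "\<forall>h\<in>G. (x + y) * h \<in> zspan G"
    proof
      fix h assume "h \<in> G"
      then obtain i j where h: "h = x ^ i * y ^ j" unfolding G_def by auto
      have "(x + y) * h = x ^ Suc i * y ^ j + x ^ i * y ^ Suc j" unfolding h by (simp add: algebra_simps)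
      thus "(x + y) * h \<in> zspan G" using sp zspan_add by metis
    qed
  qed simp
  show "algebraic_int (x * y)"
  proof (rule alg_int_zspan[OF finG oneG])
    show "\<forall>h\<in>G. (x * y) * h \<in> zspan G"
    proof
      fix h assume "h \<in> G"
      then obtain i j where h: "h = x ^ i * y ^ j" unfolding G_def by auto
      have "(x * y) * h = x ^ Suc i * y ^ Suc j" unfolding h by (simp add: algebra_simps)
      thus "(x * y) * h \<in> zspan G" using sp by metis
    qed
  qed simp
qed

hide_const (open) Matrix.mat Matrix.vec Determinant.det Matrix.row Matrix.col

lemma OK_closed:
  assumes "subfield_of_complex K" "\<forall>x\<in>K. cnj x \<in> K"
  shows "0 \<in> ring_of_integers K" "1 \<in> ring_of_integers K"
    "\<And>x y. x \<in> ring_of_integers K \<Longrightarrow> y \<in> ring_of_integers K \<Longrightarrow> x + y \<in> ring_of_integers K"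
    "\<And>x y. x \<in> ring_of_integers K \<Longrightarrow> y \<in> ring_of_integers K \<Longrightarrow> x * y \<in> ring_of_integers K"
    "\<And>x. x \<in> ring_of_integers K \<Longrightarrow> - x \<in> ring_of_integers K"
    "\<And>x. x \<in> ring_of_integers K \<Longrightarrow> cnj x \<in> ring_of_integers K"
  using assms alg_int_closed unfolding ring_of_integers_def subfield_of_complex_def by auto

lemma OK_sum:
  assumes "subfield_of_complex K" "\<forall>x\<in>K. cnj x \<in> K"
  shows "finite S \<Longrightarrow> (\<forall>i\<in>S. f i \<in> ring_of_integers K) \<Longrightarrow> sum f S \<in> ring_of_integers K"
  by (induction S rule: finite_induct) (auto intro: OK_closed[OF assms])

lemma OK_prod:
  assumes "subfield_of_complex K" "\<forall>x\<in>K. cnj x \<in> K"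
  shows "finite S \<Longrightarrow> (\<forall>i\<in>S. f i \<in> ring_of_integers K) \<Longrightarrow> prod f S \<in> ring_of_integers K"
  by (induction S rule: finite_induct) (auto intro: OK_closed[OF assms])

lemma det_OK:
  fixes A :: "complex ^'n ^'n"
  assumes "subfield_of_complex K" "\<forall>x\<in>K. cnj x \<in> K" "\<forall>i k. A $ i $ k \<in> ring_of_integers K"
  shows "Determinants.det A \<in> ring_of_integers K"
  unfolding Determinants.det_def
proof (intro OK_sum[OF assms(1,2)] ballI OK_closed(4)[OF assms(1,2)] OK_prod[OF assms(1,2)])
  show "finite {p. p permutes (UNIV :: 'n set)}" by (simp add: finite_permutations)
  fix p :: "'n \<Rightarrow> 'n"
  have "sign p = 1 \<or> sign p = -1" by (simp add: sign_def)
  thus "of_int (sign p) \<in> ring_of_integers K"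
    using OK_closed(2,5)[OF assms(1,2)] by auto
qed (use assms(3) in auto)

lemma det_cnj:
  fixes A :: "complex ^'n ^'n"
  shows "Determinants.det (conj_transpose A) = cnj (Determinants.det A)"
proof -
  have "conj_transpose A = transpose (\<chi> i j. cnj (A $ i $ j))"
    by (simp add: conj_transpose_def transpose_def)
  hence "Determinants.det (conj_transpose A) = Determinants.det (\<chi> i j. cnj (A $ i $ j))"
    by (simp add: Determinants.det_transpose)
  also have "\<dots> = cnj (Determinants.det A)"
    unfolding Determinants.det_def by simp
  finally show ?thesis .
qed

theorem mainTheorem2:
  fixes K :: "complex set" and A :: "complex ^'n ^'n" and v :: "complex ^'n"
    and lambda :: complex and j :: 'n
  assumes "number_field K"
    and "class_number_one K"
    and "\<forall>x\<in>K. cnj x \<in> K"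
    and "odd CARD('n)"
    and "\<forall>i k. A $ i $ k \<in> ring_of_integers K"
    and "v = column j A"
    and "conj_transpose A ** A = mat lambda"
    and "lambda = (\<Sum>i\<in>UNIV. cnj (v $ i) * v $ i)"
  shows "(\<exists>r\<in>ring_of_integers K. lambda = r * cnj r)
         \<and> lambda \<in> ring_of_integers (K \<inter> complex_of_real ` UNIV)"
proof -
  let ?O = "ring_of_integers K"
  have sf: "subfield_of_complex K" using assms(1) by (simp add: number_field_def)
  note cl = OK_closed[OF sf assms(3)]
  have vO: "\<And>i. v $ i \<in> ?O" using assms(5,6) by (simp add: column_def)
  have lamO: "lambda \<in> ?O" unfolding assms(8)
    by (rule OK_sum[OF sf assms(3)]) (auto intro: cl vO)
  have "lambda = complex_of_real (\<Sum>i\<in>UNIV. (Re (v $ i))\<^sup>2 + (Im (v $ i))\<^sup>2)"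
    unfolding assms(8) by (simp add: complex_mult_cnj mult.commute[of "cnj _"])
  hence lamR: "lambda \<in> complex_of_real ` UNIV" by blast
  hence cl_lam: "cnj lambda = lambda" by auto
  have part2: "lambda \<in> ring_of_integers (K \<inter> complex_of_real ` UNIV)"
    using lamO lamR by (simp add: ring_of_integers_def)
  define d where "d = Determinants.det A"
  have dO: "d \<in> ?O" unfolding d_def by (rule det_OK[OF sf assms(3,5)])
  obtain m where m: "CARD('n) = 2 * m + 1" using assms(4) oddE by blast
  have "cnj d * d = Determinants.det (conj_transpose A ** A)"
    by (simp add: d_def Determinants.det_mul det_cnj)
  also have "\<dots> = lambda ^ CARD('n)" unfolding assms(7)
    by (subst det_diagonal) (auto simp: Finite_Cartesian_Product.mat_def)
  finally have dd: "d * cnj d = lambda ^ CARD('n)" by (simp add: mult.commute)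
  show ?thesis
  proof (cases "lambda = 0")
    case True
    thus ?thesis using part2 cl(1) by force
  next
    case False
    define q where "q = lambda ^ m"
    have qO: "q \<in> ?O" unfolding q_def by (induction m) (auto intro: cl lamO)
    have q0: "q \<noteq> 0" using False by (simp add: q_def)
    have pq: "d * cnj d = lambda * (q * cnj q)"
      unfolding dd q_def m using cl_lam by (simp add: power_add power_mult_distrib power2_eq_square[symmetric] power_mult[symmetric] mult_ac)
    define I where "I = {a * d + b * q | a b. a \<in> ?O \<and> b \<in> ?O}"
    have "is_ideal_in I ?O"
      unfolding is_ideal_in_def
    proof (intro conjI ballI)
      show "I \<subseteq> ?O" unfolding I_def using dO qO by (auto intro: cl)
      have "0 = 0 * d + 0 * q" by simp
      thus "0 \<in> I" unfolding I_def using cl(1) by blast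
      fix x y assume "x \<in> I" "y \<in> I"
      then obtain a b a' b' where "x = a * d + b * q" "y = a' * d + b' * q" "a \<in> ?O" "b \<in> ?O" "a' \<in> ?O" "b' \<in> ?O"
        unfolding I_def by blast
      moreover have "x + y = (a + a') * d + (b + b') * q" using calculation by (simp add: algebra_simps)
      ultimately show "x + y \<in> I" unfolding I_def using cl(3) by blast
    next
      fix r x assume "r \<in> ?O" "x \<in> I"
      then obtain a b where "x = a * d + b * q" "a \<in> ?O" "b \<in> ?O" unfolding I_def by blast
      moreover have "r * x = (r * a) * d + (r * b) * q" using calculation by (simp add: algebra_simps)
      ultimately show "r * x \<in> I" unfolding I_def using cl(4) \<open>r \<in> ?O\<close> by blast
    qed
    then obtain g where gO: "g \<in> ?O" and Ig: "I = {g * r | r. r \<in> ?O}"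
      using assms(2) unfolding class_number_one_def by blast
    have "d \<in> I" unfolding I_def using cl(1,2) by force
    then obtain p' where p': "d = g * p'" "p' \<in> ?O" unfolding Ig by blast
    have "q \<in> I" unfolding I_def using cl(1,2) by force
    then obtain q' where q': "q = g * q'" "q' \<in> ?O" unfolding Ig by blast
    have "g \<in> I" unfolding Ig using cl(2) by force
    then obtain a b where ab: "g = a * d + b * q" "a \<in> ?O" "b \<in> ?O" unfolding I_def by blast
    have g0: "g \<noteq> 0" using q0 q' by auto
    have q'0: "q' \<noteq> 0" using q0 q' by auto
    have "g * 1 = g * (a * p' + b * q')" using ab(1) p'(1) q'(1) by (simp add: algebra_simps)
    hence bez: "a * p' + b * q' = 1" using g0 by simp
    have "(g * cnj g) * (p' * cnj p') = (g * cnj g) * (lambda * (q' * cnj q'))"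
      using pq unfolding p'(1) q'(1) by (simp add: mult_ac)
    moreover have "g * cnj g \<noteq> 0" using g0 by simp
    ultimately have pq': "p' * cnj p' = lambda * (q' * cnj q')" by simp
    define s where "s = a * lambda * cnj q' + b * cnj p'"
    have sO: "s \<in> ?O" unfolding s_def using ab p' q' lamO by (auto intro!: cl)
    have qs: "q' * s = cnj p'"
    proof -
      have "q' * s = a * (lambda * (q' * cnj q')) + b * q' * cnj p'" unfolding s_def by (simp add: algebra_simps)
      also have "\<dots> = (a * p' + b * q') * cnj p'" unfolding pq'[symmetric] by (simp add: algebra_simps)
      finally show ?thesis using bez by simp
    qed
    have "(q' * cnj q') * (s * cnj s) = (q' * s) * cnj (q' * s)" by (simp add: mult_ac)
    also have "\<dots> = (q' * cnj q') * lambda" unfolding qs using pq' by (simp add: mult_ac)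
    finally have "s * cnj s = lambda" using q'0 by simp
    thus ?thesis using sO part2 by metis
  qed
qed

end
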